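(* Let $G=(A,\nu)\in\Gamma$. If there is a route $pm\in\mathcal R$ with $\nu_{pm}=0$ and $a_{pm}>0$, then $$\lim_{\tau\to0}\lim_{\delta\to0}\lim_{\epsilon\to0}\limsup_{n\to\infty}\frac1{n\tau}\sup_{y\in\mathbb Z_+^{\mathcal R},\,|y|<\epsilon n}\log\mathbb P\big[E^{(n)}_{\tau,\delta,y}(G)\big]=-\infty.$$
   Context: Star network: channels $\mathcal S=\{1,\dots,N\}$ with capacities $C_i>0$; routes are unordered pairs $ij$ of distinct channels with arrival rates $\lambda_{ij}\ge0$ and parameters $\mu_{ij}>0$; $\mathcal R=\{ij:\lambda_{ij}>0\}$. For $x\in\mathbb R_+^{\mathcal R}$, $x_i=\sum_{j:ij\in\mathcal R}x_{ij}$, $\nu_{ij}(x)=x_{ij}(C_i/x_i\wedge C_j/x_j)$ if $x_{ij}>0$ and $0$ otherwise, $\mu_{ij}(x)=\mu_{ij}\nu_{ij}(x)$, $\nu(x)=(\nu_{ij}(x))_{ij\in\mathcal R}$. $Q(t,y)$ is the Markov jump process on $\mathbb Z_+^{\mathcal R}$ started at $y$ jumping $x\to x+e_{ij}$ at rate $\lambda_{ij}$ and $x\to x-e_{ij}$ at rate $\mu_{ij}(x)$; $\mathbb P$ its law. $A(t)=(A_{ij}(t))_{ij\in\mathcal R}$, $A_{ij}(t)$ the number of arrivals on route $ij$ in $[0,t]$. $|\cdot|$ is a norm on $\mathbb R^{\mathcal R}$. No ergodicity is assumed. $V=\{\nu\in\mathbb R_+^{\mathcal R}:\sum_{j:ij\in\mathcal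 R}\nu_{ij}\le C_i\ \forall i\}$. The set of empirical generators is $\Gamma=\mathbb R_+^{\mathcal R}\times V$, elements $G=(A,\nu)$ with $A=(a_{ij})$, with distance $d(G,G')=\sum_{ij}|a_{ij}-a'_{ij}|+\sum_{ij}|\nu_{ij}-\nu'_{ij}|$ and balls $B(G,\delta)$. The empirical generator is $G_t=\big(\tfrac1tA(t),\tfrac1t\int_0^t\nu(Q(s))ds\big)$ (with $Q(s)=Q(s,y)$), and $$E^{(n)}_{\tau,\delta,y}(G)=\Big\{G_{n\tau}\in B(G,\delta),\ \sup_{t\in[0,n\tau]}|Q(t,y)|<\delta n\Big\}.$$ *)

theory Defs
  imports "HOL-Probability.Probability"
begin

(* Channels are 1..N; a route ij (unordered pair of distinct channels) is encoded as the
   ordered pair (i,j) with i < j.  lam, mu : route => real; C : channel => real.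
   Vectors indexed by routes are functions (nat*nat) => _, vanishing off the route set. *)

type_synonym route = "nat \<times> nat"

definition routes :: "nat \<Rightarrow> (route \<Rightarrow> real) \<Rightarrow> route set" where
  "routes N lam = {(i,j). 1 \<le> i \<and> i < j \<and> j \<le> N \<and> lam (i,j) > 0}"

definition supported :: "route set \<Rightarrow> (route \<Rightarrow> 'a::zero) \<Rightarrow> bool" where
  "supported R x \<longleftrightarrow> (\<forall>r. r \<notin> R \<longrightarrow> x r = 0)"

definition is_norm_on :: "route set \<Rightarrow> ((route \<Rightarrow> real) \<Rightarrow> real) \<Rightarrow> bool" where
  "is_norm_on R nrm \<longleftrightarrow>
     (\<forall>x. supported R x \<longrightarrow> nrm x \<ge> 0 \<and> (nrm x = 0 \<longleftrightarrow> x = (\<lambda>_. 0))) \<and>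
     (\<forall>x c. supported R x \<longrightarrow> nrm (\<lambda>r. c * x r) = \<bar>c\<bar> * nrm x) \<and>
     (\<forall>x y. supported R x \<longrightarrow> supported R y \<longrightarrow> nrm (\<lambda>r. x r + y r) \<le> nrm x + nrm y)"

definition load :: "route set \<Rightarrow> (route \<Rightarrow> real) \<Rightarrow> nat \<Rightarrow> real" where
  "load R x i = (\<Sum>r\<in>R. if fst r = i \<or> snd r = i then x r else 0)"

definition nuf :: "nat \<Rightarrow> (nat \<Rightarrow> real) \<Rightarrow> (route \<Rightarrow> real) \<Rightarrow> (route \<Rightarrow> real) \<Rightarrow> route \<Rightarrow> real" where
  "nuf N C lam x r =
     (if r \<in> routes N lam \<and> x r > 0
      then x r * min (C (fst r) / load (routes N lam) x (fst r)) (C (snd r) / load (routes N lam) x (snd r))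
      else 0)"

definition Vset :: "nat \<Rightarrow> (nat \<Rightarrow> real) \<Rightarrow> (route \<Rightarrow> real) \<Rightarrow> (route \<Rightarrow> real) set" where
  "Vset N C lam = {v. supported (routes N lam) v \<and> (\<forall>r. v r \<ge> 0) \<and>
      (\<forall>i\<in>{1..N}. load (routes N lam) v i \<le> C i)}"

definition Gamma_set :: "nat \<Rightarrow> (nat \<Rightarrow> real) \<Rightarrow> (route \<Rightarrow> real) \<Rightarrow> ((route \<Rightarrow> real) \<times> (route \<Rightarrow> real)) set" where
  "Gamma_set N C lam = {(a,v). supported (routes N lam) a \<and> (\<forall>r. a r \<ge> 0) \<and> v \<in> Vset N C lam}"

definition dG :: "route set \<Rightarrow> ((route \<Rightarrow> real) \<times> (route \<Rightarrow> real)) \<Rightarrow> ((route \<Rightarrow> real) \<times> (route \<Rightarrow> real)) \<Rightarrow> real" where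
  "dG R G G' = (\<Sum>r\<in>R. \<bar>fst G r - fst G' r\<bar>) + (\<Sum>r\<in>R. \<bar>snd G r - snd G' r\<bar>)"

(* ---- Construction of the Markov jump process (Gillespie / jump-chain construction) ----
   Transition types: (r, True) = arrival x -> x + e_r at rate lam r;
                     (r, False) = departure x -> x - e_r at rate mu r * nu_r(x). *)

definition trans :: "nat \<Rightarrow> (route \<Rightarrow> real) \<Rightarrow> (route \<times> bool) list" where
  "trans N lam =
     (let L = [(i,j). i \<leftarrow> [1..<Suc N], j \<leftarrow> [Suc i..<Suc N], lam (i,j) > 0]
      in map (\<lambda>r. (r, True)) L @ map (\<lambda>r. (r, False)) L)"

definition rate :: "nat \<Rightarrow> (nat \<Rightarrow> real) \<Rightarrow> (route \<Rightarrow> real) \<Rightarrow> (route \<Rightarrow> real) \<Rightarrow> (route \<Rightarrow> nat) \<Rightarrow> route \<times> bool \<Rightarrow> real" where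
  "rate N C lam mu x e = (if snd e then lam (fst e) else mu (fst e) * nuf N C lam (\<lambda>r. real (x r)) (fst e))"

definition qtot :: "nat \<Rightarrow> (nat \<Rightarrow> real) \<Rightarrow> (route \<Rightarrow> real) \<Rightarrow> (route \<Rightarrow> real) \<Rightarrow> (route \<Rightarrow> nat) \<Rightarrow> real" where
  "qtot N C lam mu x = sum_list (map (rate N C lam mu x) (trans N lam))"

(* pick_tr the transition with probability rate/qtot, using u uniform on [0,1] *)
definition pick_tr :: "nat \<Rightarrow> (nat \<Rightarrow> real) \<Rightarrow> (route \<Rightarrow> real) \<Rightarrow> (route \<Rightarrow> real) \<Rightarrow> (route \<Rightarrow> nat) \<Rightarrow> real \<Rightarrow> route \<times> bool" where
  "pick_tr N C lam mu x u =
     (case find (\<lambda>k. u * qtot N C lam mu x < sum_list (map (rate N C lam mu x) (take (Suc k) (trans N lam))))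
                [0..<length (trans N lam)] of
        Some k \<Rightarrow> trans N lam ! k
      | None \<Rightarrow> hd (trans N lam))"

definition apply_tr :: "(route \<Rightarrow> nat) \<Rightarrow> route \<times> bool \<Rightarrow> (route \<Rightarrow> nat)" where
  "apply_tr x e = (if snd e then x(fst e := x (fst e) + 1) else x(fst e := x (fst e) - 1))"

(* omega k = (E_k, U_k): E_k ~ Exp(1), U_k ~ Unif[0,1], all independent *)
primrec jchain :: "nat \<Rightarrow> (nat \<Rightarrow> real) \<Rightarrow> (route \<Rightarrow> real) \<Rightarrow> (route \<Rightarrow> real) \<Rightarrow> (route \<Rightarrow> nat)
                   \<Rightarrow> (nat \<Rightarrow> real \<times> real) \<Rightarrow> nat \<Rightarrow> (route \<Rightarrow> nat)" where
  "jchain N C lam mu y \<omega> 0 = y"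
| "jchain N C lam mu y \<omega> (Suc k) =
     apply_tr (jchain N C lam mu y \<omega> k) (pick_tr N C lam mu (jchain N C lam mu y \<omega> k) (snd (\<omega> k)))"

definition jev :: "nat \<Rightarrow> (nat \<Rightarrow> real) \<Rightarrow> (route \<Rightarrow> real) \<Rightarrow> (route \<Rightarrow> real) \<Rightarrow> (route \<Rightarrow> nat)
                   \<Rightarrow> (nat \<Rightarrow> real \<times> real) \<Rightarrow> nat \<Rightarrow> route \<times> bool" where
  "jev N C lam mu y \<omega> k = pick_tr N C lam mu (jchain N C lam mu y \<omega> k) (snd (\<omega> k))"

primrec jtime :: "nat \<Rightarrow> (nat \<Rightarrow> real) \<Rightarrow> (route \<Rightarrow> real) \<Rightarrow> (route \<Rightarrow> real) \<Rightarrow> (route \<Rightarrow> nat)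
                   \<Rightarrow> (nat \<Rightarrow> real \<times> real) \<Rightarrow> nat \<Rightarrow> real" where
  "jtime N C lam mu y \<omega> 0 = 0"
| "jtime N C lam mu y \<omega> (Suc k) =
     jtime N C lam mu y \<omega> k + fst (\<omega> k) / qtot N C lam mu (jchain N C lam mu y \<omega> k)"

definition njumps :: "nat \<Rightarrow> (nat \<Rightarrow> real) \<Rightarrow> (route \<Rightarrow> real) \<Rightarrow> (route \<Rightarrow> real) \<Rightarrow> (route \<Rightarrow> nat)
                   \<Rightarrow> (nat \<Rightarrow> real \<times> real) \<Rightarrow> real \<Rightarrow> nat" where
  "njumps N C lam mu y \<omega> t = card {k. 1 \<le> k \<and> jtime N C lam mu y \<omega> k \<le> t}"

definition Qp :: "nat \<Rightarrow> (nat \<Rightarrow> real) \<Rightarrow> (route \<Rightarrow> real) \<Rightarrow> (route \<Rightarrow> real) \<Rightarrow> (route \<Rightarrow> nat)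
                   \<Rightarrow> (nat \<Rightarrow> real \<times> real) \<Rightarrow> real \<Rightarrow> (route \<Rightarrow> nat)" where
  "Qp N C lam mu y \<omega> t = jchain N C lam mu y \<omega> (njumps N C lam mu y \<omega> t)"

definition Arr :: "nat \<Rightarrow> (nat \<Rightarrow> real) \<Rightarrow> (route \<Rightarrow> real) \<Rightarrow> (route \<Rightarrow> real) \<Rightarrow> (route \<Rightarrow> nat)
                   \<Rightarrow> (nat \<Rightarrow> real \<times> real) \<Rightarrow> real \<Rightarrow> route \<Rightarrow> nat" where
  "Arr N C lam mu y \<omega> t r = card {k. k < njumps N C lam mu y \<omega> t \<and> jev N C lam mu y \<omega> k = (r, True)}"

definition Omega :: "(nat \<Rightarrow> real \<times> real) measure" where
  "Omega = PiM UNIV (\<lambda>_. density lborel (exponential_density 1) \<Otimes>\<^sub>M uniform_measure lborel {0..1})"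

definition empgen :: "nat \<Rightarrow> (nat \<Rightarrow> real) \<Rightarrow> (route \<Rightarrow> real) \<Rightarrow> (route \<Rightarrow> real) \<Rightarrow> (route \<Rightarrow> nat)
                   \<Rightarrow> (nat \<Rightarrow> real \<times> real) \<Rightarrow> real \<Rightarrow> (route \<Rightarrow> real) \<times> (route \<Rightarrow> real)" where
  "empgen N C lam mu y \<omega> t =
     ((\<lambda>r. real (Arr N C lam mu y \<omega> t r) / t),
      (\<lambda>r. integral {0..t} (\<lambda>s. nuf N C lam (\<lambda>r'. real (Qp N C lam mu y \<omega> s r')) r) / t))"

definition Event :: "nat \<Rightarrow> (nat \<Rightarrow> real) \<Rightarrow> (route \<Rightarrow> real) \<Rightarrow> (route \<Rightarrow> real) \<Rightarrow> ((route \<Rightarrow> real) \<Rightarrow> real)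
                   \<Rightarrow> nat \<Rightarrow> real \<Rightarrow> real \<Rightarrow> (route \<Rightarrow> nat) \<Rightarrow> (route \<Rightarrow> real) \<times> (route \<Rightarrow> real)
                   \<Rightarrow> (nat \<Rightarrow> real \<times> real) set" where
  "Event N C lam mu nrm n \<tau> \<delta> y G =
     {\<omega> \<in> space Omega.
        dG (routes N lam) (empgen N C lam mu y \<omega> (real n * \<tau>)) G < \<delta> \<and>
        (SUP t\<in>{0..real n * \<tau>}. ereal (nrm (\<lambda>r. real (Qp N C lam mu y \<omega> t r)))) < ereal (\<delta> * real n)}"

definition elog :: "real \<Rightarrow> ereal" where
  "elog p = (if p \<le> 0 then -\<infinity> else ereal (ln p))"

definition rate_fun :: "nat \<Rightarrow> (nat \<Rightarrow> real) \<Rightarrow> (route \<Rightarrow> real) \<Rightarrow> (route \<Rightarrow> real) \<Rightarrow> ((route \<Rightarrow> real) \<Rightarrow> real)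
                   \<Rightarrow> (route \<Rightarrow> real) \<times> (route \<Rightarrow> real) \<Rightarrow> real \<Rightarrow> real \<Rightarrow> real \<Rightarrow> nat \<Rightarrow> ereal" where
  "rate_fun N C lam mu nrm G \<tau> \<delta> \<epsilon> n =
     ereal (1 / (real n * \<tau>)) *
     (SUP y\<in>{y. supported (routes N lam) y \<and> nrm (\<lambda>r. real (y r)) < \<epsilon> * real n}.
        elog (measure Omega (Event N C lam mu nrm n \<tau> \<delta> y G)))"

end

theory Submission
  imports Defs
begin

lemma supportedD: "supported R x \<Longrightarrow> r \<notin> R \<Longrightarrow> x r = 0"
  unfolding supported_def by blast

lemma norm_facts:
  assumes "is_norm_on R nrm"
  shows "\<And>x. supported R x \<Longrightarrow> nrm x \<ge> 0"
    and "\<And>x. supported R x \<Longrightarrow> nrm x = 0 \<longleftrightarrow> x = (\<lambda>_. 0)"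
    and "\<And>x c. supported R x \<Longrightarrow> nrm (\<lambda>r. c * x r) = \<bar>c\<bar> * nrm x"
    and "\<And>x y. supported R x \<Longrightarrow> supported R y \<Longrightarrow> nrm (\<lambda>r. x r + y r) \<le> nrm x + nrm y"
  using assms unfolding is_norm_on_def by blast+

lemma norm_sum_le:
  assumes N: "is_norm_on R nrm" and F: "finite F" "F \<subseteq> R"
  shows "nrm (\<lambda>s. \<Sum>r\<in>F. f r * (if s = r then 1 else 0)) \<le> (\<Sum>r\<in>F. \<bar>f r\<bar> * nrm (\<lambda>s. if s = r then 1 else 0))"
  using F
proof (induction F rule: finite_induct)
  case empty
  have "supported R (\<lambda>_. 0::real)" by (simp add: supported_def)
  then have "nrm (\<lambda>_. 0) = 0" using norm_facts(2)[OF N] by blast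
  then show ?case by simp
next
  case (insert r0 F)
  let ?e = "\<lambda>r s. if s = r then 1 else (0::real)"
  have se: "supported R (\<lambda>s. f r0 * ?e r0 s)" using insert by (auto simp: supported_def)
  have sF: "supported R (\<lambda>s. \<Sum>r\<in>F. f r * ?e r s)" using insert
    by (auto simp: supported_def intro!: sum.neutral)
  have "nrm (\<lambda>s. \<Sum>r\<in>insert r0 F. f r * ?e r s) = nrm (\<lambda>s. f r0 * ?e r0 s + (\<Sum>r\<in>F. f r * ?e r s))"
    using insert by simp
  also have "\<dots> \<le> nrm (\<lambda>s. f r0 * ?e r0 s) + nrm (\<lambda>s. \<Sum>r\<in>F. f r * ?e r s)"
    using norm_facts(4)[OF N se sF] by simp
  also have "nrm (\<lambda>s. f r0 * ?e r0 s) = \<bar>f r0\<bar> * nrm (?e r0)"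
    using norm_facts(3)[OF N, of "?e r0" "f r0"] insert by (auto simp: supported_def)
  finally show ?case using insert by simp
qed

lemma supported_decomp:
  fixes x :: "route \<Rightarrow> real"
  assumes "supported R x" "finite R"
  shows "x = (\<lambda>s. \<Sum>r\<in>R. x r * (if s = r then 1 else 0))"
proof
  fix s show "x s = (\<Sum>r\<in>R. x r * (if s = r then 1 else 0))"
  proof (cases "s \<in> R")
    case True
    have "(\<Sum>r\<in>R. x r * (if s = r then 1 else 0)) = (\<Sum>r\<in>R. if r = s then x s else 0)"
      by (intro sum.cong) auto
    also have "\<dots> = x s" using True assms by simp
    finally show ?thesis by simp
  next
    case False
    then have "(\<Sum>r\<in>R. x r * (if s = r then 1 else 0)) = 0" by (intro sum.neutral) auto
    moreover have "x s = 0" using assms(1) False unfolding supported_def by blast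
    ultimately show ?thesis by simp
  qed
qed

lemma norm_lip:
  assumes N: "is_norm_on R nrm" and fin: "finite R" and x: "supported R x" and y: "supported R y"
  shows "\<bar>nrm x - nrm y\<bar> \<le> (\<Sum>r\<in>R. \<bar>x r - y r\<bar> * nrm (\<lambda>s. if s = r then 1 else 0))"
proof -
  let ?g = "\<lambda>x y. (\<Sum>r\<in>R. \<bar>x r - y r\<bar> * nrm (\<lambda>s. if s = r then 1 else 0))"
  have key: "nrm x \<le> nrm y + ?g x y" if x: "supported R x" and y: "supported R y" for x y
  proof -
    have sd: "supported R (\<lambda>r. x r - y r)" using x y by (auto simp: supported_def)
    have "x = (\<lambda>r. y r + (x r - y r))" by simp
    then have "nrm x = nrm (\<lambda>r. y r + (x r - y r))" by simp
    also have "\<dots> \<le> nrm y + nrm (\<lambda>r. x r - y r)" using norm_facts(4)[OF N y sd] .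
    also have "nrm (\<lambda>r. x r - y r) \<le> ?g x y"
      using norm_sum_le[OF N fin order_refl, of "\<lambda>r. x r - y r"] supported_decomp[OF sd fin] by simp
    finally show ?thesis by simp
  qed
  have "?g x y = ?g y x" by (intro sum.cong) auto
  then show ?thesis using key[OF x y] key[OF y x] by linarith
qed

lemma norm_lower:
  assumes N: "is_norm_on R nrm" and fin: "finite R" and pm: "pm \<in> R"
  shows "\<exists>c>0. \<forall>x::route\<Rightarrow>real. supported R x \<longrightarrow> \<bar>x pm\<bar> \<le> c * nrm x"
proof -
  define Kc where "Kc = {x::route\<Rightarrow>real. supported R x \<and> (\<forall>r. \<bar>x r\<bar> \<le> 1) \<and> (\<exists>r\<in>R. \<bar>x r\<bar> = 1)}"
  define K0 where "K0 = Pi\<^sub>E UNIV (\<lambda>r. if r \<in> R then {-1..1} else {0::real})"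
  have "compactin (product_topology (\<lambda>_. euclidean) UNIV) K0"
    unfolding K0_def by (subst compactin_PiE) auto
  then have cK0: "compact K0" by (simp add: euclidean_product_topology)
  have cl: "closed (\<Union>r\<in>R. {x::route\<Rightarrow>real. \<bar>x r\<bar> = 1})"
  proof (intro closed_UN ballI fin)
    fix r
    have "continuous_on UNIV (\<lambda>x::route\<Rightarrow>real. \<bar>x r\<bar>)"
      by (intro continuous_intros continuous_on_product_coordinates)
    then show "closed {x::route\<Rightarrow>real. \<bar>x r\<bar> = 1}"
      by (intro closed_Collect_eq) auto
  qed
  have KcE: "Kc = K0 \<inter> (\<Union>r\<in>R. {x. \<bar>x r\<bar> = 1})"
    unfolding Kc_def K0_def supported_def by (auto simp: PiE_iff split: if_splits) (fastforce simp: abs_le_iff)+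
  have cKc: "compact Kc" unfolding KcE using cK0 cl by (rule compact_Int_closed)
  define e1 where "e1 = (\<lambda>s. if s = pm then 1 else (0::real))"
  have e1K: "e1 \<in> Kc" using pm unfolding Kc_def e1_def supported_def by auto
  have cont: "continuous_on Kc nrm"
    unfolding continuous_on_def
  proof
    fix y assume yK: "y \<in> Kc"
    let ?g = "\<lambda>x. (\<Sum>r\<in>R. \<bar>x r - y r\<bar> * nrm (\<lambda>s. if s = r then 1 else 0))"
    have gc: "continuous_on UNIV ?g"
      by (intro continuous_intros continuous_on_product_coordinates)
    then have "(?g \<longlongrightarrow> ?g y) (at y within Kc)"
      by (meson UNIV_I continuous_on_def tendsto_within_subset subset_UNIV)
    then have g0: "(?g \<longlongrightarrow> 0) (at y within Kc)" by simp
    have "\<forall>\<^sub>F x in at y within Kc. norm (nrm x - nrm y) \<le> ?g x"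
      unfolding eventually_at_filter
      using norm_lip[OF N fin] yK unfolding Kc_def by (auto intro!: always_eventually)
    then have "((\<lambda>x. nrm x - nrm y) \<longlongrightarrow> 0) (at y within Kc)"
      using g0 by (rule Lim_null_comparison)
    then show "(nrm \<longlongrightarrow> nrm y) (at y within Kc)" by (simp add: LIM_zero_iff)
  qed
  obtain x0 where x0: "x0 \<in> Kc" "\<And>z. z \<in> Kc \<Longrightarrow> nrm x0 \<le> nrm z"
    using continuous_attains_inf[OF cKc _ cont] e1K by blast
  have x0s: "supported R x0" using x0 unfolding Kc_def by auto
  have "x0 \<noteq> (\<lambda>_. 0)" using x0 unfolding Kc_def by auto
  then have m0: "nrm x0 > 0" using norm_facts(1,2)[OF N x0s] by linarith
  show ?thesis
  proof (intro exI[of _ "1 / nrm x0"] conjI allI impI)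
    show "1 / nrm x0 > 0" using m0 by simp
    fix x :: "route \<Rightarrow> real" assume xs: "supported R x"
    show "\<bar>x pm\<bar> \<le> 1 / nrm x0 * nrm x"
    proof (cases "\<forall>r\<in>R. x r = 0")
      case True
      then show ?thesis using pm norm_facts(1)[OF N xs] m0 by simp
    next
      case False
      define M where "M = Max ((\<lambda>r. \<bar>x r\<bar>) ` R)"
      have Mge: "\<bar>x r\<bar> \<le> M" if "r \<in> R" for r using that fin unfolding M_def by auto
      have "M \<in> (\<lambda>r. \<bar>x r\<bar>) ` R" unfolding M_def using fin pm by (intro Max_in) auto
      then obtain r1 where r1: "r1 \<in> R" "\<bar>x r1\<bar> = M" by force
      have Mpos: "M > 0" using False Mge by force
      define z where "z = (\<lambda>r. (1 / M) * x r)"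
      have zK: "z \<in> Kc" unfolding Kc_def z_def
      proof (intro CollectI conjI allI)
        show "supported R (\<lambda>r. 1 / M * x r)" using xs by (auto simp: supported_def)
        fix r show "\<bar>1 / M * x r\<bar> \<le> 1"
          using Mge[of r] Mpos supportedD[OF xs, of r] by (cases "r \<in> R") (auto simp: abs_mult field_simps)
      next
        show "\<exists>r\<in>R. \<bar>1 / M * x r\<bar> = 1" using r1 Mpos by (auto simp: abs_mult)
      qed
      have "nrm z = nrm x / M" unfolding z_def using norm_facts(3)[OF N xs, of "1/M"] Mpos by simp
      with x0(2)[OF zK] have "nrm x0 \<le> nrm x / M" by simp
      then have "M \<le> nrm x / nrm x0" using Mpos m0 by (simp add: field_simps)
      then show ?thesis using Mge[OF pm] by simp
    qed
  qed
qed

lemma set_trans: "set (trans N lam) = {(r,b). r \<in> routes N lam}"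
  unfolding trans_def routes_def Let_def by (auto simp: image_iff)

lemma sum_list_map_ge:
  fixes f :: "'a \<Rightarrow> real"
  assumes "\<And>x. x \<in> set xs \<Longrightarrow> f x \<ge> 0" "a \<in> set xs"
  shows "f a \<le> sum_list (map f xs)"
  using assms
proof (induction xs)
  case Nil then show ?case by simp
next
  case (Cons b xs)
  have "sum_list (map f xs) \<ge> 0" using Cons.prems by (intro sum_list_nonneg) auto
  moreover have "f b \<ge> 0" using Cons.prems by auto
  ultimately show ?case using Cons by (cases "a = b") (auto simp: add_increasing)
qed

lemma finite_routes: "finite (routes N lam)"
proof -
  have "routes N lam \<subseteq> {1..N} \<times> {1..N}" unfolding routes_def by auto
  then show ?thesis by (rule finite_subset) auto
qed

locale starnet =
  fixes N :: nat and C :: "nat \<Rightarrow> real" and lam mu :: "route \<Rightarrow> real" and pm :: route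
  assumes C_pos: "\<forall>i\<in>{1..N}. C i > 0"
    and lam_nonneg: "\<forall>r. lam r \<ge> 0"
    and mu_pos: "\<forall>r. mu r > 0"
    and pm_in: "pm \<in> routes N lam"
begin

abbreviation "R \<equiv> routes N lam"
abbreviation "tr \<equiv> trans N lam"
abbreviation "q \<equiv> qtot N C lam mu"
abbreviation "rt \<equiv> rate N C lam mu"
abbreviation "pick \<equiv> pick_tr N C lam mu"
definition "stepf x u = apply_tr x (pick x u)"
definition "dind x u = (if pick x u = (pm, False) then 1 else (0::real))"
definition "pdep x = real (length tr) * rt x (pm, False) / q x"

lemma routes_bounds: "r \<in> R \<Longrightarrow> 1 \<le> fst r \<and> fst r \<le> N \<and> 1 \<le> snd r \<and> snd r \<le> N \<and> fst r \<noteq> snd r"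
  unfolding routes_def by auto

lemma load_ge: "r \<in> R \<Longrightarrow> (\<And>s. x s \<ge> 0) \<Longrightarrow> fst r = i \<or> snd r = i \<Longrightarrow> x r \<le> load R x i"
  unfolding load_def
  using sum_nonneg_leq_bound[of R "\<lambda>s. if fst s = i \<or> snd s = i then x s else 0"]
  by (smt (verit, best) finite_routes member_le_sum)

lemma nuf_nonneg: "(\<And>s. x s \<ge> 0) \<Longrightarrow> nuf N C lam x r \<ge> 0"
proof -
  assume xnn: "\<And>s. x s \<ge> 0"
  show ?thesis
  proof (cases "r \<in> R \<and> x r > 0")
    case True
    then have r: "r \<in> R" "x r > 0" by auto
    have l1: "load R x (fst r) > 0" using load_ge[of r x "fst r"] r xnn by force
    have l2: "load R x (snd r) > 0" using load_ge[of r x "snd r"] r xnn by force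
    have c1: "C (fst r) > 0" "C (snd r) > 0" using C_pos routes_bounds[OF r(1)] by auto
    show ?thesis unfolding nuf_def using True l1 l2 c1 by auto
  qed (auto simp: nuf_def)
qed

lemma rt_nonneg: "rt x e \<ge> 0"
proof -
  have "lam r \<ge> 0" "mu r \<ge> 0" for r using lam_nonneg[rule_format, of r] mu_pos[rule_format, of r] by auto
  moreover have "nuf N C lam (\<lambda>r. real (x r)) r \<ge> 0" for r by (rule nuf_nonneg) auto
  ultimately show ?thesis unfolding rate_def by auto
qed

lemma q_pos: "q x > 0"
proof -
  have "(pm, True) \<in> set tr" using pm_in by (simp add: set_trans)
  then have "rt x (pm, True) \<le> q x" unfolding qtot_def
    by (intro sum_list_map_ge rt_nonneg)
  moreover have "rt x (pm, True) > 0" using pm_in unfolding rate_def routes_def by auto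
  ultimately show ?thesis by simp
qed

lemma tr_ne: "tr \<noteq> []"
proof
  assume "tr = []"
  moreover have "(pm, True) \<in> set tr" using pm_in by (simp add: set_trans)
  ultimately show False by simp
qed

lemma pick_in: "pick x u \<in> set tr"
  unfolding pick_tr_def using tr_ne
  by (auto split: option.split simp: find_Some_iff)

lemma hd_tr: "snd (hd tr) = True"
proof -
  obtain L where L: "tr = map (\<lambda>r. (r, True)) L @ map (\<lambda>r. (r, False)) L"
    unfolding trans_def Let_def by auto
  with tr_ne have "L \<noteq> []" by auto
  then show ?thesis using L by (cases L) auto
qed

lemma supported_nxt: "supported R x \<Longrightarrow> supported R (stepf x u)"
  using pick_in[of x u] unfolding stepf_def apply_tr_def supported_def
  by (auto simp: set_trans)

end

definition "Mx = density lborel (exponential_density 1) \<Otimes>\<^sub>M uniform_measure lborel {0..1::real}"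

lemma prob_Mx: "prob_space Mx"
  unfolding Mx_def
  by (intro prob_space_pair prob_space_exponential_density prob_space_uniform_measure) auto

interpretation Sq: sequence_space Mx
proof -
  interpret P: prob_space Mx by (rule prob_Mx)
  show "sequence_space Mx"
    by unfold_locales (simp_all add: P.emeasure_space_1 P.sigma_finite_countable)
qed

lemma Omega_eq: "Omega = Sq.S" unfolding Omega_def Mx_def ..

lemma space_Omega: "space Omega = UNIV"
  unfolding Omega_eq by (simp add: space_PiM Mx_def space_pair_measure)

lemma measurable_find:
  assumes "\<And>k. {u \<in> space M. P k u} \<in> sets M"
  shows "(\<lambda>u. find (\<lambda>k. P k u) xs) \<in> M \<rightarrow>\<^sub>M count_space UNIV"
proof (induction xs)
  case Nil then show ?case by simp
next
  case (Cons a xs)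
  have "(\<lambda>u. if P a u then Some a else find (\<lambda>k. P k u) xs) \<in> M \<rightarrow>\<^sub>M count_space UNIV"
    by (rule measurable_If[OF _ Cons assms]) simp
  then show ?case by simp
qed

context starnet begin

lemma pick_measurable: "(\<lambda>u. pick x u) \<in> borel \<rightarrow>\<^sub>M count_space UNIV"
proof -
  have f: "(\<lambda>u. find (\<lambda>k. u * q x < sum_list (map (rt x) (take (Suc k) tr))) [0..<length tr]) \<in> borel \<rightarrow>\<^sub>M count_space UNIV"
    by (rule measurable_find) measurable
  have "(\<lambda>u. case_option (hd tr) (\<lambda>k. tr ! k) (find (\<lambda>k. u * q x < sum_list (map (rt x) (take (Suc k) tr))) [0..<length tr])) \<in> borel \<rightarrow>\<^sub>M count_space UNIV"
    by (rule measurable_compose[OF f]) simp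
  then show ?thesis unfolding pick_tr_def by simp
qed

lemma pick_measurable_Omega: "(\<lambda>\<omega>. pick x (snd (\<omega> k))) \<in> Omega \<rightarrow>\<^sub>M count_space UNIV"
proof -
  have "(\<lambda>\<omega>. snd (\<omega> k)) \<in> Omega \<rightarrow>\<^sub>M lborel"
    unfolding Omega_def by measurable
  then show ?thesis
    by (rule measurable_compose) (simp add: pick_measurable)
qed

lemma shift_measurable: "(\<lambda>\<omega> i. \<omega> (Suc i)) \<in> Omega \<rightarrow>\<^sub>M Omega"
  unfolding Omega_eq
  by (rule measurable_PiM_single') (auto simp: space_PiM)

end

lemma exp_laplace:
  fixes a :: real assumes a: "a \<ge> 0"
  shows "(\<integral>\<^sup>+E. ennreal (exp (- a * E)) \<partial>density lborel (exponential_density 1)) = ennreal (1 / (1 + a))"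
proof -
  have "(\<integral>\<^sup>+E. ennreal (exp (- a * E)) \<partial>density lborel (exponential_density 1))
      = (\<integral>\<^sup>+E. ennreal (exponential_density 1 E) * ennreal (exp (- a * E)) \<partial>lborel)"
    by (rule nn_integral_density) measurable
  also have "\<dots> = (\<integral>\<^sup>+E. ennreal (1 / (1 + a)) * ennreal (exponential_density (1 + a) E) \<partial>lborel)"
  proof (intro nn_integral_cong)
    fix E :: real
    show "ennreal (exponential_density 1 E) * ennreal (exp (- a * E)) =
          ennreal (1 / (1 + a)) * ennreal (exponential_density (1 + a) E)"
    proof (cases "E < 0")
      case True then show ?thesis by (simp add: exponential_density_def)
    next
      case False
      have e: "exp (- E * 1) * exp (- a * E) = exp (- E * (1 + a))"
        by (simp add: exp_add[symmetric] algebra_simps)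
      have "exponential_density 1 E * exp (- a * E) = 1 / (1 + a) * exponential_density (1 + a) E"
        using False a e by (simp add: exponential_density_def)
      then show ?thesis using False a
        by (simp add: ennreal_mult[symmetric] exponential_density_def)
    qed
  qed
  also have "\<dots> = ennreal (1 / (1 + a)) * (\<integral>\<^sup>+E. ennreal (exponential_density (1 + a) E) \<partial>lborel)"
    by (rule nn_integral_cmult) measurable
  also have "(\<integral>\<^sup>+E. ennreal (exponential_density (1 + a) E) \<partial>lborel) = 1"
  proof -
    interpret P: prob_space "density lborel (exponential_density (1 + a))"
      using a by (intro prob_space_exponential_density) simp
    have "emeasure (density lborel (exponential_density (1 + a))) UNIV = 1"
      using P.emeasure_space_1 by simp
    then show ?thesis by (simp add: emeasure_density)
  qed
  finally show ?thesis by simp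
qed

context starnet begin

lemma stepsum:
  assumes "k < length tr"
  shows "sum_list (map (rt x) (take (Suc k) tr)) = sum_list (map (rt x) (take k tr)) + rt x (tr ! k)"
  using assms by (simp add: take_Suc_conv_app_nth)

lemma stepsum_mono: "sum_list (map (rt x) (take k tr)) \<ge> 0"
  by (intro sum_list_nonneg) (auto simp: rt_nonneg)

lemma dep_subset:
  "{u. pick x u = (pm, False)} \<inter> {0..1} \<subseteq>
     (\<Union>k\<in>{k. k < length tr \<and> tr ! k = (pm, False)}.
        {sum_list (map (rt x) (take k tr)) / q x ..< sum_list (map (rt x) (take (Suc k) tr)) / q x})"
proof
  fix u assume u: "u \<in> {u. pick x u = (pm, False)} \<inter> {0..1}"
  then have upick: "pick x u = (pm, False)" and u0: "0 \<le> u" by auto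
  let ?s = "\<lambda>k. sum_list (map (rt x) (take k tr))"
  let ?P = "\<lambda>k. u * q x < ?s (Suc k)"
  have qp: "q x > 0" by (rule q_pos)
  show "u \<in> (\<Union>k\<in>{k. k < length tr \<and> tr ! k = (pm, False)}. {?s k / q x ..< ?s (Suc k) / q x})"
  proof (cases "find ?P [0..<length tr]")
    case None
    then have "pick x u = hd tr" unfolding pick_tr_def by simp
    with upick have "snd (hd tr) = False" by simp
    with hd_tr show ?thesis by simp
  next
    case (Some k)
    have k: "k < length tr" "?P k" "\<And>j. j < k \<Longrightarrow> \<not> ?P j"
      using Some unfolding find_Some_iff by auto
    have "pick x u = tr ! k" using Some unfolding pick_tr_def by simp
    with upick have pk: "tr ! k = (pm, False)" by simp
    have lo: "?s k \<le> u * q x"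
    proof (cases k)
      case 0 then show ?thesis using u0 qp by simp
    next
      case (Suc j) then show ?thesis using k(3)[of j] by simp
    qed
    have "?s k / q x \<le> u" using lo qp by (simp add: field_simps)
    moreover have "u < ?s (Suc k) / q x" using k(2) qp by (simp add: field_simps)
    ultimately have "u \<in> {?s k / q x ..< ?s (Suc k) / q x}" by simp
    moreover have "k \<in> {k. k < length tr \<and> tr ! k = (pm, False)}" using k(1) pk by simp
    ultimately show ?thesis by (rule UN_I[rotated])
  qed
qed

lemma dep_sets: "{u. pick x u = (pm, False)} \<in> sets borel"
proof -
  have "(\<lambda>u. pick x u) -` {(pm, False)} \<inter> space borel \<in> sets borel"
    by (rule measurable_sets[OF pick_measurable]) simp
  then show ?thesis by (simp add: vimage_def)
qed

lemma pdep_nonneg: "pdep x \<ge> 0"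
  unfolding pdep_def using rt_nonneg q_pos by (simp add: less_imp_le)

lemma dep_prob:
  "emeasure (uniform_measure lborel {0..1::real}) {u. pick x u = (pm, False)} \<le> ennreal (pdep x)"
proof -
  let ?s = "\<lambda>k. sum_list (map (rt x) (take k tr))"
  let ?K = "{k. k < length tr \<and> tr ! k = (pm, False)}"
  have fK: "finite ?K" by simp
  have "emeasure (uniform_measure lborel {0..1::real}) {u. pick x u = (pm, False)}
        = emeasure lborel ({0..1} \<inter> {u. pick x u = (pm, False)}) / emeasure lborel {0..1::real}"
    using dep_sets by (intro emeasure_uniform_measure) auto
  also have "\<dots> = emeasure lborel ({u. pick x u = (pm, False)} \<inter> {0..1})"
    by (simp add: Int_commute divide_ennreal_def)
  also have "\<dots> \<le> emeasure lborel (\<Union>k\<in>?K. {?s k / q x ..< ?s (Suc k) / q x})"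
    by (rule emeasure_mono[OF dep_subset]) auto
  also have "\<dots> \<le> (\<Sum>k\<in>?K. emeasure lborel {?s k / q x ..< ?s (Suc k) / q x})"
    by (rule emeasure_subadditive_finite[OF fK]) auto
  also have "\<dots> = (\<Sum>k\<in>?K. ennreal (rt x (pm, False) / q x))"
  proof (intro sum.cong refl)
    fix k assume "k \<in> ?K"
    then have k: "k < length tr" "tr ! k = (pm, False)" by auto
    have "?s (Suc k) = ?s k + rt x (pm, False)" using stepsum[OF k(1)] k(2) by simp
    moreover have "rt x (pm, False) \<ge> 0" by (rule rt_nonneg)
    ultimately show "emeasure lborel {?s k / q x ..< ?s (Suc k) / q x} = ennreal (rt x (pm, False) / q x)"
      using q_pos[of x] by (subst emeasure_lborel_Ico) (auto simp: field_simps diff_divide_distrib)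
  qed
  also have "\<dots> = ennreal (real (card ?K) * (rt x (pm, False) / q x))"
    using rt_nonneg q_pos by (simp add: ennreal_of_nat_eq_real_of_nat ennreal_mult[symmetric] less_imp_le)
  also have "\<dots> \<le> ennreal (pdep x)"
  proof (intro ennreal_leI)
    have "card ?K \<le> card {..<length tr}" by (intro card_mono) auto
    then have "real (card ?K) \<le> real (length tr)" by simp
    moreover have "rt x (pm, False) / q x \<ge> 0" using rt_nonneg q_pos by (simp add: less_imp_le)
    ultimately show "real (card ?K) * (rt x (pm, False) / q x) \<le> pdep x"
      unfolding pdep_def using mult_right_mono[of "real (card ?K)" "real (length tr)" "rt x (pm, False) / q x"]
      by (simp only: times_divide_eq_right)
  qed
  finally show ?thesis .
qed

end

context starnet begin

lemma step_int:
  fixes th :: real assumes th: "th \<ge> 0"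
  shows "(\<integral>\<^sup>+s. ennreal (exp (th * dind x (snd s) - (exp th - 1) * pdep x * fst s)) \<partial>Mx) \<le> 1"
proof -
  let ?c = "exp th - 1" and ?p = "pdep x"
  let ?Ex = "density lborel (exponential_density 1)" and ?U = "uniform_measure lborel {0..1::real}"
  let ?D = "{u. pick x u = (pm, False)}"
  have c0: "?c \<ge> 0" using th by simp
  have p0: "?p \<ge> 0" by (rule pdep_nonneg)
  interpret U: prob_space ?U by (intro prob_space_uniform_measure) auto
  have Dsets: "?D \<in> sets ?U" using dep_sets by simp
  have split: "ennreal (exp (th * dind x u - ?c * ?p * E)) = ennreal (exp (- (?c * ?p) * E)) * ennreal (exp (th * dind x u))" for u E
    by (simp add: ennreal_mult[symmetric] exp_add[symmetric] algebra_simps)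
  have mdind: "(\<lambda>u. dind x u) \<in> borel_measurable borel"
  proof -
    have eq: "dind x = indicator ?D" unfolding dind_def by (auto simp: indicator_def)
    show ?thesis unfolding eq using dep_sets by (intro borel_measurable_indicator) simp
  qed
  have meas: "(\<lambda>s. ennreal (exp (th * dind x (snd s) - ?c * ?p * fst s))) \<in> borel_measurable (?Ex \<Otimes>\<^sub>M ?U)"
  proof -
    have "(\<lambda>s. dind x (snd s)) \<in> borel_measurable (?Ex \<Otimes>\<^sub>M ?U)"
    proof (rule measurable_compose[OF measurable_snd])
      have "sets ?U = sets borel" by simp
      then show "dind x \<in> borel_measurable ?U"
        using mdind measurable_cong_sets[of ?U borel borel borel] by simp
    qed
    then show ?thesis by measurable
  qed
  have "(\<integral>\<^sup>+s. ennreal (exp (th * dind x (snd s) - ?c * ?p * fst s)) \<partial>Mx)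
       = (\<integral>\<^sup>+E. (\<integral>\<^sup>+u. ennreal (exp (th * dind x u - ?c * ?p * E)) \<partial>?U) \<partial>?Ex)"
    unfolding Mx_def using U.nn_integral_fst[OF meas, symmetric] by simp
  also have "\<dots> = (\<integral>\<^sup>+E. ennreal (exp (- (?c * ?p) * E)) * (\<integral>\<^sup>+u. ennreal (exp (th * dind x u)) \<partial>?U) \<partial>?Ex)"
  proof (intro nn_integral_cong)
    fix E :: real
    show "(\<integral>\<^sup>+u. ennreal (exp (th * dind x u - ?c * ?p * E)) \<partial>?U) = ennreal (exp (- (?c * ?p) * E)) * (\<integral>\<^sup>+u. ennreal (exp (th * dind x u)) \<partial>?U)"
      unfolding split by (rule nn_integral_cmult) (use mdind in measurable)
  qed
  also have "\<dots> = (\<integral>\<^sup>+E. ennreal (exp (- (?c * ?p) * E)) \<partial>?Ex) * (\<integral>\<^sup>+u. ennreal (exp (th * dind x u)) \<partial>?U)"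
    by (rule nn_integral_multc) measurable
  also have "(\<integral>\<^sup>+E. ennreal (exp (- (?c * ?p) * E)) \<partial>?Ex) = ennreal (1 / (1 + ?c * ?p))"
    using c0 p0 by (intro exp_laplace) simp
  also have "(\<integral>\<^sup>+u. ennreal (exp (th * dind x u)) \<partial>?U) \<le> ennreal (1 + ?c * ?p)"
  proof -
    have "(\<integral>\<^sup>+u. ennreal (exp (th * dind x u)) \<partial>?U) = (\<integral>\<^sup>+u. 1 + ennreal ?c * indicator ?D u \<partial>?U)"
    proof (intro nn_integral_cong)
      fix u
      have e1: "ennreal (exp th) = 1 + ennreal (exp th - 1)"
        using c0 ennreal_plus[of 1 "exp th - 1"] by simp
      show "ennreal (exp (th * dind x u)) = 1 + ennreal ?c * indicator ?D u"
        using e1 by (auto simp: dind_def indicator_def)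
    qed
    also have "\<dots> = (\<integral>\<^sup>+u. 1 \<partial>?U) + (\<integral>\<^sup>+u. ennreal ?c * indicator ?D u \<partial>?U)"
      using Dsets by (intro nn_integral_add) auto
    also have "\<dots> = 1 + ennreal ?c * emeasure ?U ?D"
      using Dsets U.emeasure_space_1 by (simp add: nn_integral_cmult_indicator)
    also have "\<dots> \<le> 1 + ennreal ?c * ennreal ?p"
      by (intro add_left_mono mult_left_mono dep_prob) auto
    also have "1 + ennreal ?c * ennreal ?p = ennreal (1 + ?c * ?p)"
      using c0 p0 by (simp add: ennreal_mult ennreal_plus[symmetric])
    finally show ?thesis .
  qed
  finally have "(\<integral>\<^sup>+s. ennreal (exp (th * dind x (snd s) - ?c * ?p * fst s)) \<partial>Mx) \<le> ennreal (1 / (1 + ?c * ?p)) * ennreal (1 + ?c * ?p)"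
    by (simp add: mult_left_mono)
  also have "\<dots> = 1"
  proof -
    have "1 + ?c * ?p > 0" using c0 p0 by (smt (verit) mult_nonneg_nonneg)
    then show ?thesis by (simp add: ennreal_mult[symmetric])
  qed
  finally show ?thesis .
qed

primrec Wf :: "real \<Rightarrow> (route \<Rightarrow> nat) \<Rightarrow> real \<Rightarrow> nat \<Rightarrow> (nat \<Rightarrow> real \<times> real) \<Rightarrow> real" where
  "Wf th y K 0 \<omega> = 1"
| "Wf th y K (Suc m) \<omega> =
     (if K > 0 then exp (th * dind y (snd (\<omega> 0)) - (exp th - 1) * pdep y * fst (\<omega> 0)) *
        Wf th (stepf y (snd (\<omega> 0))) (K - dind y (snd (\<omega> 0))) m (\<lambda>i. \<omega> (Suc i))
      else 1)"

lemma Wf_nonneg: "Wf th y K m \<omega> \<ge> 0"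
  by (induction m arbitrary: y K \<omega>) auto

lemma Wf_measurable: "Wf th y K m \<in> borel_measurable Omega"
proof (induction m arbitrary: y K)
  case 0 then show ?case by simp
next
  case (Suc m)
  define H where "H e \<omega> = (if K > 0 then exp (th * (if e = (pm, False) then 1 else 0) - (exp th - 1) * pdep y * fst (\<omega> 0)) *
        Wf th (apply_tr y e) (K - (if e = (pm, False) then 1 else 0)) m (\<lambda>i. \<omega> (Suc i)) else 1)" for e \<omega>
  have eq: "Wf th y K (Suc m) = (\<lambda>\<omega>. H (pick y (snd (\<omega> 0))) \<omega>)"
    by (simp add: fun_eq_iff H_def dind_def stepf_def)
  have f0: "(\<lambda>\<omega>. fst (\<omega> 0)) \<in> borel_measurable Omega" unfolding Omega_def by measurable
  have "H e \<in> borel_measurable Omega" for e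
  proof -
    have w: "(\<lambda>\<omega>. Wf th (apply_tr y e) (K - (if e = (pm, False) then 1 else 0)) m (\<lambda>i. \<omega> (Suc i))) \<in> borel_measurable Omega"
      by (rule measurable_compose[OF shift_measurable Suc.IH])
    show ?thesis unfolding H_def using f0 w by measurable
  qed
  then show ?case unfolding eq
    by (rule measurable_compose_countable[OF _ pick_measurable_Omega])
qed

lemma Omega_prob: "prob_space Omega"
  unfolding Omega_eq by (rule Sq.P.prob_space_axioms)

lemma W_int:
  fixes th :: real assumes th: "th \<ge> 0"
  shows "(\<integral>\<^sup>+\<omega>. ennreal (Wf th y K m \<omega>) \<partial>Omega) \<le> 1"
proof (induction m arbitrary: y K)
  case 0
  interpret prob_space Omega by (rule Omega_prob)
  show ?case using emeasure_space_1 by simp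
next
  case (Suc m)
  interpret prob_space Omega by (rule Omega_prob)
  show ?case
  proof (cases "K > 0")
    case False
    then show ?thesis using emeasure_space_1 by simp
  next
    case True
    let ?phi = "\<lambda>s. exp (th * dind y (snd s) - (exp th - 1) * pdep y * fst s)"
    let ?W' = "\<lambda>s. Wf th (stepf y (snd s)) (K - dind y (snd s)) m"
    have cm: "(\<lambda>(s, \<omega>). case_nat s \<omega>) \<in> Mx \<Otimes>\<^sub>M Sq.S \<rightarrow>\<^sub>M Sq.S" by measurable
    have mW: "(\<lambda>\<omega>. ennreal (Wf th y K (Suc m) \<omega>)) \<in> borel_measurable Sq.S"
      using Wf_measurable[of th y K "Suc m"] unfolding Omega_eq by measurable
    have "(\<integral>\<^sup>+\<omega>. ennreal (Wf th y K (Suc m) \<omega>) \<partial>Omega)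
        = (\<integral>\<^sup>+\<omega>. ennreal (Wf th y K (Suc m) \<omega>) \<partial>distr (Mx \<Otimes>\<^sub>M Sq.S) Sq.S (\<lambda>(s, \<omega>). case_nat s \<omega>))"
      unfolding Omega_eq Sq.PiM_iter ..
    also have "\<dots> = (\<integral>\<^sup>+z. ennreal (Wf th y K (Suc m) (case_prod case_nat z)) \<partial>(Mx \<Otimes>\<^sub>M Sq.S))"
      using cm mW by (subst nn_integral_distr) (auto simp: case_prod_beta')
    also have "\<dots> = (\<integral>\<^sup>+s. (\<integral>\<^sup>+\<omega>. ennreal (Wf th y K (Suc m) (case_nat s \<omega>)) \<partial>Sq.S) \<partial>Mx)"
      using measurable_compose[OF cm mW]
      by (subst Sq.P.nn_integral_fst[symmetric]) (auto simp: case_prod_beta')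
    also have "\<dots> = (\<integral>\<^sup>+s. ennreal (?phi s) * (\<integral>\<^sup>+\<omega>. ennreal (?W' s \<omega>) \<partial>Sq.S) \<partial>Mx)"
    proof (intro nn_integral_cong)
      fix s :: "real \<times> real"
      have "(\<integral>\<^sup>+\<omega>. ennreal (Wf th y K (Suc m) (case_nat s \<omega>)) \<partial>Sq.S) = (\<integral>\<^sup>+\<omega>. ennreal (?phi s) * ennreal (?W' s \<omega>) \<partial>Sq.S)"
        using True by (intro nn_integral_cong) (simp add: ennreal_mult Wf_nonneg)
      also have "\<dots> = ennreal (?phi s) * (\<integral>\<^sup>+\<omega>. ennreal (?W' s \<omega>) \<partial>Sq.S)"
        using Wf_measurable[of th "stepf y (snd s)" "K - dind y (snd s)" m] unfolding Omega_eq
        by (intro nn_integral_cmult) measurable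
      finally show "(\<integral>\<^sup>+\<omega>. ennreal (Wf th y K (Suc m) (case_nat s \<omega>)) \<partial>Sq.S) = ennreal (?phi s) * (\<integral>\<^sup>+\<omega>. ennreal (?W' s \<omega>) \<partial>Sq.S)" .
    qed
    also have "\<dots> \<le> (\<integral>\<^sup>+s. ennreal (?phi s) \<partial>Mx)"
    proof (intro nn_integral_mono)
      fix s :: "real \<times> real"
      have "(\<integral>\<^sup>+\<omega>. ennreal (?W' s \<omega>) \<partial>Sq.S) \<le> 1" using Suc.IH unfolding Omega_eq by simp
      then show "ennreal (?phi s) * (\<integral>\<^sup>+\<omega>. ennreal (?W' s \<omega>) \<partial>Sq.S) \<le> ennreal (?phi s)"
        using mult_left_mono[of _ 1 "ennreal (?phi s)"] by simp
    qed
    also have "\<dots> \<le> 1" using step_int[OF th] .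
    finally show ?thesis .
  qed
qed

end

context starnet begin

primrec Dc :: "(route \<Rightarrow> nat) \<Rightarrow> nat \<Rightarrow> (nat \<Rightarrow> real \<times> real) \<Rightarrow> real" where
  "Dc y 0 \<omega> = 0"
| "Dc y (Suc m) \<omega> = dind y (snd (\<omega> 0)) + Dc (stepf y (snd (\<omega> 0))) m (\<lambda>i. \<omega> (Suc i))"

primrec Cp :: "(route \<Rightarrow> nat) \<Rightarrow> nat \<Rightarrow> (nat \<Rightarrow> real \<times> real) \<Rightarrow> real" where
  "Cp y 0 \<omega> = 0"
| "Cp y (Suc m) \<omega> = pdep y * fst (\<omega> 0) + Cp (stepf y (snd (\<omega> 0))) m (\<lambda>i. \<omega> (Suc i))"

lemma dind_nonneg: "dind y u \<ge> 0" by (simp add: dind_def)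

lemma Dc_mono_Suc: "Dc y m \<omega> \<le> Dc y (Suc m) \<omega>"
proof (induction m arbitrary: y \<omega>)
  case 0 then show ?case by (simp add: dind_nonneg)
next
  case (Suc m)
  have "Dc (stepf y (snd (\<omega> 0))) m (\<lambda>i. \<omega> (Suc i)) \<le> Dc (stepf y (snd (\<omega> 0))) (Suc m) (\<lambda>i. \<omega> (Suc i))"
    by (rule Suc.IH)
  then show ?case by simp
qed

lemma Cp_nonneg: "(\<And>k. fst (\<omega> k) \<ge> 0) \<Longrightarrow> Cp y m \<omega> \<ge> 0"
proof (induction m arbitrary: y \<omega>)
  case 0 then show ?case by simp
next
  case (Suc m)
  have "Cp (stepf y (snd (\<omega> 0))) m (\<lambda>i. \<omega> (Suc i)) \<ge> 0" using Suc by auto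
  moreover have "pdep y * fst (\<omega> 0) \<ge> 0" using Suc.prems pdep_nonneg by simp
  ultimately show ?case by simp
qed

lemma W_P1: "K \<le> Dc y m \<omega> \<Longrightarrow> Wf th y K (Suc m) \<omega> = Wf th y K m \<omega>"
proof (induction m arbitrary: y K \<omega>)
  case 0 then show ?case by simp
next
  case (Suc m)
  show ?case
  proof (cases "K > 0")
    case False then show ?thesis by simp
  next
    case True
    have "K - dind y (snd (\<omega> 0)) \<le> Dc (stepf y (snd (\<omega> 0))) m (\<lambda>i. \<omega> (Suc i))"
      using Suc.prems by simp
    from Suc.IH[OF this] True show ?thesis by simp
  qed
qed

lemma W_P2:
  assumes th: "th \<ge> 0" and E: "\<And>k. fst (\<omega> k) \<ge> 0"
  shows "K \<le> Dc y m \<omega> \<Longrightarrow> exp (th * K - (exp th - 1) * Cp y m \<omega>) \<le> Wf th y K m \<omega>"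
  using E
proof (induction m arbitrary: y K \<omega>)
  case 0
  then have "th * K \<le> 0" using th by (simp add: mult_nonneg_nonpos)
  then show ?case by simp
next
  case (Suc m)
  have c0: "exp th - 1 \<ge> 0" using th by simp
  show ?case
  proof (cases "K > 0")
    case False
    have "Cp y (Suc m) \<omega> \<ge> 0" by (rule Cp_nonneg) (use Suc.prems in auto)
    then have "(exp th - 1) * Cp y (Suc m) \<omega> \<ge> 0" using c0 by simp
    moreover have "th * K \<le> 0" using False th by (simp add: mult_nonneg_nonpos)
    ultimately show ?thesis using False by simp
  next
    case True
    let ?d = "dind y (snd (\<omega> 0))" and ?y' = "stepf y (snd (\<omega> 0))" and ?w = "\<lambda>i. \<omega> (Suc i)"
    have "K - ?d \<le> Dc ?y' m ?w" using Suc.prems by simp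
    then have ih: "exp (th * (K - ?d) - (exp th - 1) * Cp ?y' m ?w) \<le> Wf th ?y' (K - ?d) m ?w"
      using Suc.IH[of "K - ?d" ?y' ?w] Suc.prems(2) by simp
    have "exp (th * K - (exp th - 1) * Cp y (Suc m) \<omega>)
        = exp (th * ?d - (exp th - 1) * pdep y * fst (\<omega> 0)) * exp (th * (K - ?d) - (exp th - 1) * Cp ?y' m ?w)"
      by (simp add: exp_add[symmetric] algebra_simps)
    also have "\<dots> \<le> exp (th * ?d - (exp th - 1) * pdep y * fst (\<omega> 0)) * Wf th ?y' (K - ?d) m ?w"
      using ih by (intro mult_left_mono) auto
    finally show ?thesis using True by simp
  qed
qed

lemma Dc_measurable: "Dc y m \<in> borel_measurable Omega"
proof (induction m arbitrary: y)
  case 0 then show ?case by simp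
next
  case (Suc m)
  define H where "H e \<omega> = (if e = (pm, False) then 1 else 0) + Dc (apply_tr y e) m (\<lambda>i. \<omega> (Suc i))" for e \<omega>
  have eq: "Dc y (Suc m) = (\<lambda>\<omega>. H (pick y (snd (\<omega> 0))) \<omega>)"
    by (simp add: fun_eq_iff H_def dind_def stepf_def)
  have "H e \<in> borel_measurable Omega" for e
  proof -
    have w: "(\<lambda>\<omega>. Dc (apply_tr y e) m (\<lambda>i. \<omega> (Suc i))) \<in> borel_measurable Omega"
      by (rule measurable_compose[OF shift_measurable Suc.IH])
    show ?thesis unfolding H_def using w by measurable
  qed
  then show ?case unfolding eq
    by (rule measurable_compose_countable[OF _ pick_measurable_Omega])
qed

declare Wf_measurable[measurable] Dc_measurable[measurable]

lemma markov_W: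
  assumes th: "th \<ge> 0" and L: "L > 0"
  shows "emeasure Omega {\<omega> \<in> space Omega. L \<le> Wf th y K m \<omega>} \<le> ennreal (1 / L)"
proof -
  have "{\<omega> \<in> space Omega. L \<le> Wf th y K m \<omega>} = {\<omega> \<in> space Omega. 1 \<le> ennreal (1 / L) * ennreal (Wf th y K m \<omega>)}"
  proof (intro Collect_cong conj_cong refl)
    fix \<omega>
    have "ennreal (1 / L) * ennreal (Wf th y K m \<omega>) = ennreal (Wf th y K m \<omega> / L)"
      using L Wf_nonneg by (simp add: ennreal_mult[symmetric])
    then show "(L \<le> Wf th y K m \<omega>) = (1 \<le> ennreal (1 / L) * ennreal (Wf th y K m \<omega>))"
      using L by (simp add: ennreal_1[symmetric] del: ennreal_1) (simp add: field_simps)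
  qed
  also have "emeasure Omega \<dots> \<le> ennreal (1 / L) * (\<integral>\<^sup>+\<omega>\<in>space Omega. ennreal (Wf th y K m \<omega>) \<partial>Omega)"
    by (intro nn_integral_Markov_inequality) measurable
  also have "(\<integral>\<^sup>+\<omega>\<in>space Omega. ennreal (Wf th y K m \<omega>) \<partial>Omega) = (\<integral>\<^sup>+\<omega>. ennreal (Wf th y K m \<omega>) \<partial>Omega)"
    by (intro nn_integral_cong) (simp add: indicator_def)
  also have "ennreal (1 / L) * \<dots> \<le> ennreal (1 / L) * 1"
    by (intro mult_left_mono W_int th) simp
  finally show ?thesis by simp
qed

lemma union_bound:
  assumes th: "th \<ge> 0" and L: "L > 0"
  shows "emeasure Omega (\<Union>m. {\<omega> \<in> space Omega. K \<le> Dc y m \<omega> \<and> L \<le> Wf th y K m \<omega>}) \<le> ennreal (1 / L)"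
proof -
  let ?A = "\<lambda>m. {\<omega> \<in> space Omega. K \<le> Dc y m \<omega> \<and> L \<le> Wf th y K m \<omega>}"
  have sets: "range ?A \<subseteq> sets Omega"
  proof
    fix X assume "X \<in> range ?A"
    then obtain m where m: "X = ?A m" by auto
    have "Dc y m \<in> borel_measurable Omega" "Wf th y K m \<in> borel_measurable Omega"
      by (rule Dc_measurable, rule Wf_measurable)
    then show "X \<in> sets Omega" unfolding m by measurable
  qed
  have inc: "incseq ?A"
  proof (rule incseq_SucI)
    fix m
    show "?A m \<subseteq> ?A (Suc m)"
    proof
      fix \<omega> assume w: "\<omega> \<in> ?A m"
      then have "K \<le> Dc y (Suc m) \<omega>" using Dc_mono_Suc[of y m \<omega>] by auto
      moreover have "Wf th y K (Suc m) \<omega> = Wf th y K m \<omega>" using w W_P1 by auto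
      ultimately show "\<omega> \<in> ?A (Suc m)" using w by auto
    qed
  qed
  have "emeasure Omega (\<Union>(range ?A)) = (SUP m. emeasure Omega (?A m))"
    using SUP_emeasure_incseq[OF sets inc] by simp
  also have "\<dots> \<le> ennreal (1 / L)"
  proof (rule SUP_least)
    fix m
    have "emeasure Omega (?A m) \<le> emeasure Omega {\<omega> \<in> space Omega. L \<le> Wf th y K m \<omega>}"
      using Wf_measurable[of th y K m] by (intro emeasure_mono) (auto, measurable)
    also have "\<dots> \<le> ennreal (1 / L)" by (rule markov_W[OF th L])
    finally show "emeasure Omega (?A m) \<le> ennreal (1 / L)" .
  qed
  finally show ?thesis by simp
qed

end

lemma card_as_sum: "real (card {k. k < (m::nat) \<and> P k}) = (\<Sum>k<m. if P k then 1 else 0)"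
proof -
  have "{k. k < m \<and> P k} = {k \<in> {..<m}. P k}" by auto
  then show ?thesis using sum.inter_filter[OF finite_lessThan[of m], of "\<lambda>_. (1::real)" P] by simp
qed

context starnet begin

abbreviation "xc y \<omega> k \<equiv> jchain N C lam mu y \<omega> k"
abbreviation "jt y \<omega> k \<equiv> jtime N C lam mu y \<omega> k"
abbreviation "je y \<omega> k \<equiv> jev N C lam mu y \<omega> k"

lemma jchain_shift: "xc y \<omega> (Suc k) = xc (stepf y (snd (\<omega> 0))) (\<lambda>i. \<omega> (Suc i)) k"
  by (induction k) (simp_all add: stepf_def)

lemma jchain_Suc_je: "xc y \<omega> (Suc k) = apply_tr (xc y \<omega> k) (je y \<omega> k)"
  by (simp add: jev_def)

lemma Dc_sum: "Dc y m \<omega> = (\<Sum>k<m. dind (xc y \<omega> k) (snd (\<omega> k)))"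
proof (induction m arbitrary: y \<omega>)
  case 0 then show ?case by simp
next
  case (Suc m)
  show ?case unfolding sum.lessThan_Suc_shift by (simp add: Suc.IH jchain_shift del: jchain.simps(2) sum.lessThan_Suc)
qed

lemma Cp_sum: "Cp y m \<omega> = (\<Sum>k<m. pdep (xc y \<omega> k) * fst (\<omega> k))"
proof (induction m arbitrary: y \<omega>)
  case 0 then show ?case by simp
next
  case (Suc m)
  show ?case unfolding sum.lessThan_Suc_shift by (simp add: Suc.IH jchain_shift del: jchain.simps(2) sum.lessThan_Suc)
qed

lemma Dc_card: "Dc y m \<omega> = real (card {k. k < m \<and> je y \<omega> k = (pm, False)})"
  unfolding Dc_sum card_as_sum by (simp add: dind_def jev_def)

lemma supported_xc: "supported R y \<Longrightarrow> supported R (xc y \<omega> k)"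
  by (induction k) (simp_all add: supported_nxt[unfolded stepf_def])

lemma queue_ineq:
  "real (xc y \<omega> m pm) \<ge> real (y pm) + (\<Sum>k<m. if je y \<omega> k = (pm, True) then 1 else 0)
                                     - (\<Sum>k<m. if je y \<omega> k = (pm, False) then 1 else 0)"
proof (induction m)
  case 0 then show ?case by simp
next
  case (Suc m)
  let ?e = "je y \<omega> m"
  have step: "real (xc y \<omega> (Suc m) pm) \<ge> real (xc y \<omega> m pm) + (if ?e = (pm, True) then 1 else 0) - (if ?e = (pm, False) then 1 else 0)"
  proof -
    have x: "xc y \<omega> (Suc m) = apply_tr (xc y \<omega> m) ?e" by (rule jchain_Suc_je)
    consider "?e = (pm, True)" | "?e = (pm, False)" | "fst ?e \<noteq> pm"
      by (metis (full_types) prod.collapse)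
    then show ?thesis
    proof cases
      case 1 then show ?thesis unfolding x by (simp add: apply_tr_def)
    next
      case 2 then show ?thesis unfolding x by (simp add: apply_tr_def of_nat_diff)
    next
      case 3
      then have "?e \<noteq> (pm, True)" "?e \<noteq> (pm, False)" by auto
      then show ?thesis using 3 unfolding x by (simp add: apply_tr_def)
    qed
  qed
  then show ?case using Suc.IH by simp
qed

lemma jt_Suc: "jt y \<omega> (Suc k) = jt y \<omega> k + fst (\<omega> k) / q (xc y \<omega> k)"
  by simp

lemma jt_strict:
  assumes good: "\<And>k. fst (\<omega> k) > 0"
  shows "strict_mono (jt y \<omega>)"
proof (rule strict_monoI_Suc)
  fix k
  have "fst (\<omega> k) / q (xc y \<omega> k) > 0" using good[of k] q_pos[of "xc y \<omega> k"] by (rule divide_pos_pos)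
  then show "jt y \<omega> k < jt y \<omega> (Suc k)" unfolding jt_Suc by linarith
qed

lemma jt_le:
  assumes good: "\<And>k. fst (\<omega> k) > 0" and ij: "i \<le> j"
  shows "jt y \<omega> i \<le> jt y \<omega> j"
proof -
  have sm: "strict_mono (jt y \<omega>)" by (rule jt_strict[where \<omega>=\<omega>, OF good])
  show ?thesis using strict_mono_less_eq[OF sm, of i j] ij by blast
qed

lemma jt_nonneg:
  assumes good: "\<And>k. fst (\<omega> k) > 0"
  shows "jt y \<omega> k \<ge> 0"
  using jt_le[where \<omega>=\<omega> and i=0 and j=k and y=y, OF good] jtime.simps(1)[of N C lam mu y \<omega>] by linarith

lemma njumps_eq:
  assumes good: "\<And>k. fst (\<omega> k) > 0" and s: "jt y \<omega> k \<le> s" "s < jt y \<omega> (Suc k)"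
  shows "njumps N C lam mu y \<omega> s = k"
proof -
  have sm: "strict_mono (jt y \<omega>)" by (rule jt_strict[where \<omega>=\<omega>, OF good])
  have "{j. 1 \<le> j \<and> jt y \<omega> j \<le> s} = {1..k}"
  proof (intro set_eqI iffI)
    fix j assume "j \<in> {j. 1 \<le> j \<and> jt y \<omega> j \<le> s}"
    then have j: "1 \<le> j" "jt y \<omega> j \<le> s" by auto
    have "j \<le> k"
    proof (rule ccontr)
      assume "\<not> j \<le> k"
      then have "Suc k \<le> j" by simp
      then have "jt y \<omega> (Suc k) \<le> jt y \<omega> j" by (rule jt_le[where \<omega>=\<omega>, OF good])
      then show False using j s by simp
    qed
    then show "j \<in> {1..k}" using j by simp
  next
    fix j assume "j \<in> {1..k}"
    then have "1 \<le> j" "j \<le> k" by auto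
    moreover have "jt y \<omega> j \<le> jt y \<omega> k" using \<open>j \<le> k\<close> by (rule jt_le[where \<omega>=\<omega>, OF good])
    ultimately show "j \<in> {j. 1 \<le> j \<and> jt y \<omega> j \<le> s}" using s by simp
  qed
  then show ?thesis unfolding njumps_def by simp
qed

lemma Qp_eq:
  assumes good: "\<And>k. fst (\<omega> k) > 0" and s: "jt y \<omega> k \<le> s" "s < jt y \<omega> (Suc k)"
  shows "Qp N C lam mu y \<omega> s = xc y \<omega> k"
  unfolding Qp_def using njumps_eq[OF assms] by simp

abbreviation "nuk y \<omega> k \<equiv> nuf N C lam (\<lambda>r. real (xc y \<omega> k r)) pm"

lemma integral_pieces:
  assumes good: "\<And>k. fst (\<omega> k) > 0"
  shows "k \<le> M \<Longrightarrow> ((\<lambda>s. nuf N C lam (\<lambda>r. real (Qp N C lam mu y \<omega> s r)) pm) has_integral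
            (\<Sum>j<k. nuk y \<omega> j * (jt y \<omega> (Suc j) - jt y \<omega> j))) {0..jt y \<omega> k}"
proof (induction k)
  case 0
  show ?case using has_integral_refl(2)[of _ "0::real"] by simp
next
  case (Suc k)
  let ?f = "\<lambda>s. nuf N C lam (\<lambda>r. real (Qp N C lam mu y \<omega> s r)) pm"
  have sm: "strict_mono (jt y \<omega>)" by (rule jt_strict[where \<omega>=\<omega>, OF good])
  have le: "jt y \<omega> k \<le> jt y \<omega> (Suc k)" by (rule jt_le[where \<omega>=\<omega>, OF good]) simp
  have c: "((\<lambda>s. nuk y \<omega> k) has_integral nuk y \<omega> k * (jt y \<omega> (Suc k) - jt y \<omega> k)) {jt y \<omega> k..jt y \<omega> (Suc k)}"
    using has_integral_const_real[of "nuk y \<omega> k" "jt y \<omega> k" "jt y \<omega> (Suc k)"] le by (simp add: mult.commute)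
  have piece: "(?f has_integral nuk y \<omega> k * (jt y \<omega> (Suc k) - jt y \<omega> k)) {jt y \<omega> k..jt y \<omega> (Suc k)}"
  proof (rule has_integral_spike_finite[OF _ _ c])
    show "finite {jt y \<omega> (Suc k)}" by simp
    fix s assume "s \<in> {jt y \<omega> k..jt y \<omega> (Suc k)} - {jt y \<omega> (Suc k)}"
    then have "jt y \<omega> k \<le> s" "s < jt y \<omega> (Suc k)" by auto
    then show "?f s = nuk y \<omega> k" using Qp_eq[where \<omega>=\<omega>, OF good] by simp
  qed
  have j0: "0 \<le> jt y \<omega> k" by (rule jt_nonneg[where \<omega>=\<omega>, OF good])
  have "(?f has_integral (\<Sum>j<k. nuk y \<omega> j * (jt y \<omega> (Suc j) - jt y \<omega> j)) + nuk y \<omega> k * (jt y \<omega> (Suc k) - jt y \<omega> k)) {0..jt y \<omega> (Suc k)}"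
    using Suc by (intro has_integral_combine[OF j0 le _ piece]) simp
  then show ?case by simp
qed

lemma integral_lower:
  assumes good: "\<And>k. fst (\<omega> k) > 0" and M: "jt y \<omega> M \<le> T" "T < jt y \<omega> (Suc M)"
  shows "(\<Sum>j<M. nuk y \<omega> j * (jt y \<omega> (Suc j) - jt y \<omega> j))
           \<le> integral {0..T} (\<lambda>s. nuf N C lam (\<lambda>r. real (Qp N C lam mu y \<omega> s r)) pm)"
proof -
  let ?f = "\<lambda>s. nuf N C lam (\<lambda>r. real (Qp N C lam mu y \<omega> s r)) pm"
  let ?S = "\<Sum>j<M. nuk y \<omega> j * (jt y \<omega> (Suc j) - jt y \<omega> j)"
  have sm: "strict_mono (jt y \<omega>)" by (rule jt_strict[where \<omega>=\<omega>, OF good])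
  have j0: "0 \<le> jt y \<omega> M" by (rule jt_nonneg[where \<omega>=\<omega>, OF good])
  have c: "((\<lambda>s. nuk y \<omega> M) has_integral nuk y \<omega> M * (T - jt y \<omega> M)) {jt y \<omega> M..T}"
    using has_integral_const_real[of "nuk y \<omega> M" "jt y \<omega> M" T] M by (simp add: mult.commute)
  have piece: "(?f has_integral nuk y \<omega> M * (T - jt y \<omega> M)) {jt y \<omega> M..T}"
  proof (rule has_integral_eq[OF _ c])
    fix s assume "s \<in> {jt y \<omega> M..T}"
    then have "jt y \<omega> M \<le> s" "s < jt y \<omega> (Suc M)" using M by auto
    then show "nuk y \<omega> M = ?f s" using Qp_eq[where \<omega>=\<omega>, OF good] by simp
  qed
  have "(?f has_integral ?S + nuk y \<omega> M * (T - jt y \<omega> M)) {0..T}"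
    by (rule has_integral_combine[OF j0 M(1) integral_pieces[where \<omega>=\<omega>, OF good order_refl] piece])
  then have "integral {0..T} ?f = ?S + nuk y \<omega> M * (T - jt y \<omega> M)" by (rule integral_unique)
  moreover have "nuk y \<omega> M * (T - jt y \<omega> M) \<ge> 0"
    using M nuf_nonneg[of "\<lambda>r. real (xc y \<omega> M r)" pm] by simp
  ultimately show ?thesis by simp
qed

end

lemma bad_null_k: "{\<omega> \<in> space Omega. fst (\<omega> k) \<le> 0} \<in> null_sets Omega"
proof -
  let ?Ex = "density lborel (exponential_density 1)" and ?U = "uniform_measure lborel {0..1::real}"
  interpret U: prob_space ?U by (intro prob_space_uniform_measure) auto
  have e0: "emeasure ?Ex {..0} = 0"
    using emeasure_erlang_density[of 1 0 0] by (simp add: erlang_CDF_def)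
  have "{..0::real} \<times> (UNIV::real set) \<in> null_sets (?Ex \<Otimes>\<^sub>M ?U)"
    using e0 by (intro U.times_in_null_sets1) (auto simp: null_sets_def)
  moreover have "{s::real\<times>real. fst s \<le> 0} = {..0} \<times> UNIV" by auto
  ultimately have nS: "{s::real\<times>real. fst s \<le> 0} \<in> null_sets Mx" unfolding Mx_def by simp
  have "{\<omega> \<in> space Omega. fst (\<omega> k) \<le> 0} = {\<omega> \<in> space Sq.S. \<omega> k \<in> {s. fst s \<le> 0}}"
    unfolding Omega_eq by auto
  moreover have "emeasure Sq.S {\<omega> \<in> space Sq.S. \<omega> k \<in> {s. fst s \<le> 0}} = emeasure Mx {s. fst s \<le> 0}"
    using nS by (intro Sq.emeasure_PiM_Collect_single) auto
  moreover have "{\<omega> \<in> space Sq.S. \<omega> k \<in> {s::real\<times>real. fst s \<le> 0}} \<in> sets Sq.S"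
    using nS by (intro sets_Collect_single) auto
  ultimately show ?thesis using nS unfolding Omega_eq by (auto simp: null_sets_def)
qed

lemma bad_null: "{\<omega> \<in> space Omega. \<exists>k. fst (\<omega> k) \<le> 0} \<in> null_sets Omega"
proof -
  have "{\<omega> \<in> space Omega. \<exists>k. fst (\<omega> k) \<le> 0} = (\<Union>k. {\<omega> \<in> space Omega. fst (\<omega> k) \<le> 0})" by auto
  then show ?thesis using bad_null_k by (auto intro: null_sets_UN)
qed

lemma dG_parts:
  assumes "r \<in> R" "finite R"
  shows "\<bar>fst G r - fst G' r\<bar> \<le> dG R G G'" "\<bar>snd G r - snd G' r\<bar> \<le> dG R G G'"
proof -
  have s1: "\<bar>fst G r - fst G' r\<bar> \<le> (\<Sum>r\<in>R. \<bar>fst G r - fst G' r\<bar>)"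
    using assms by (intro member_le_sum) auto
  have s2: "\<bar>snd G r - snd G' r\<bar> \<le> (\<Sum>r\<in>R. \<bar>snd G r - snd G' r\<bar>)"
    using assms by (intro member_le_sum) auto
  have "(\<Sum>r\<in>R. \<bar>fst G r - fst G' r\<bar>) \<ge> 0" "(\<Sum>r\<in>R. \<bar>snd G r - snd G' r\<bar>) \<ge> 0"
    by (auto intro: sum_nonneg)
  then show "\<bar>fst G r - fst G' r\<bar> \<le> dG R G G'" "\<bar>snd G r - snd G' r\<bar> \<le> dG R G G'"
    using s1 s2 unfolding dG_def by linarith+
qed

context starnet begin

lemma rt_dep: "rt x (pm, False) = mu pm * nuf N C lam (\<lambda>r. real (x r)) pm"
  by (simp add: rate_def)

lemma path_claim:
  fixes nrm :: "(route \<Rightarrow> real) \<Rightarrow> real" and a \<nu> :: "route \<Rightarrow> real"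
  assumes cN: "cN > 0" "\<forall>x::route\<Rightarrow>real. supported R x \<longrightarrow> \<bar>x pm\<bar> \<le> cN * nrm x"
    and nu0: "\<nu> pm = 0" and ys: "supported R y"
    and n: "n > 0" and tau: "tau > 0" and th: "th \<ge> 0" and delta: "delta > 0"
    and T_def: "T = real n * tau"
    and K_def: "K = (a pm - delta) * T - cN * delta * real n"
    and L_def: "L = exp (th * K - (exp th - 1) * real (length tr) * mu pm * delta * T)"
    and Kpos: "K > 0"
    and ev: "\<omega> \<in> Event N C lam mu nrm n tau delta y (a, \<nu>)"
    and good: "\<And>k. fst (\<omega> k) > 0"
  shows "\<exists>m. K \<le> Dc y m \<omega> \<and> L \<le> Wf th y K m \<omega>"
proof -
  have T: "T > 0" using n tau T_def by simp
  have evd: "dG R (empgen N C lam mu y \<omega> T) (a, \<nu>) < delta"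
    and evs: "(SUP t\<in>{0..T}. ereal (nrm (\<lambda>r. real (Qp N C lam mu y \<omega> t r)))) < ereal (delta * real n)"
    using ev unfolding Event_def T_def by auto
  let ?Arr = "real (Arr N C lam mu y \<omega> T pm)"
  let ?f = "\<lambda>s. nuf N C lam (\<lambda>r. real (Qp N C lam mu y \<omega> s r)) pm"
  let ?I = "integral {0..T} ?f"
  have d1: "\<bar>?Arr / T - a pm\<bar> < delta"
    using dG_parts(1)[OF pm_in finite_routes, of "empgen N C lam mu y \<omega> T" "(a, \<nu>)"] evd
    by (simp add: empgen_def)
  have d2: "\<bar>?I / T - \<nu> pm\<bar> < delta"
    using dG_parts(2)[OF pm_in finite_routes, of "empgen N C lam mu y \<omega> T" "(a, \<nu>)"] evd
    by (simp add: empgen_def)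
  have Arr_lo: "?Arr > (a pm - delta) * T"
  proof -
    have "?Arr / T > a pm - delta" using d1 by linarith
    then show ?thesis using T by (simp add: field_simps)
  qed
  have I_hi: "?I < delta * T"
  proof -
    have "?I / T < delta" using d2 nu0 by linarith
    then show ?thesis using T by (simp add: field_simps)
  qed
  have Kle: "(a pm - delta) * T \<ge> K" unfolding K_def using cN delta by simp
  have exM: "\<exists>k. T < jt y \<omega> k"
  proof (rule ccontr)
    assume "\<not> (\<exists>k. T < jt y \<omega> k)"
    then have all: "\<And>k. jt y \<omega> k \<le> T" by (simp add: not_less)
    have "{j. 1 \<le> j \<and> jt y \<omega> j \<le> T} = {1..}" using all by auto
    then have "njumps N C lam mu y \<omega> T = 0" unfolding njumps_def using infinite_Ici[of "1::nat"] by simp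
    then have "?Arr = 0" unfolding Arr_def by simp
    then show False using Arr_lo Kle Kpos by linarith
  qed
  define k0 where "k0 = (LEAST k. T < jt y \<omega> k)"
  have k0: "T < jt y \<omega> k0" unfolding k0_def using exM by (rule LeastI_ex)
  have k0ne: "k0 \<noteq> 0"
  proof
    assume "k0 = 0"
    then have "jt y \<omega> k0 = 0" by simp
    then show False using k0 T by simp
  qed
  define M where "M = k0 - 1"
  have SM: "Suc M = k0" unfolding M_def using k0ne by simp
  have M1: "jt y \<omega> M \<le> T"
  proof (rule ccontr)
    assume "\<not> jt y \<omega> M \<le> T"
    then have "T < jt y \<omega> M" by simp
    then have "k0 \<le> M" unfolding k0_def by (rule Least_le)
    then show False using SM by simp
  qed
  have M2: "T < jt y \<omega> (Suc M)" using k0 SM by simp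
  have QT: "Qp N C lam mu y \<omega> T = xc y \<omega> M" by (rule Qp_eq[where \<omega>=\<omega>, OF good M1 M2])
  have NT: "njumps N C lam mu y \<omega> T = M" by (rule njumps_eq[where \<omega>=\<omega>, OF good M1 M2])
  have "ereal (nrm (\<lambda>r. real (Qp N C lam mu y \<omega> T r))) \<le> (SUP t\<in>{0..T}. ereal (nrm (\<lambda>r. real (Qp N C lam mu y \<omega> t r))))"
    using T by (intro SUP_upper) auto
  then have "ereal (nrm (\<lambda>r. real (xc y \<omega> M r))) < ereal (delta * real n)"
    using evs unfolding QT by (rule order.strict_trans1)
  then have "nrm (\<lambda>r. real (xc y \<omega> M r)) < delta * real n" by simp
  moreover have "supported R (\<lambda>r. real (xc y \<omega> M r))"
    using supported_xc[OF ys, of \<omega> M] by (simp add: supported_def)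
  ultimately have xM: "real (xc y \<omega> M pm) < cN * delta * real n"
    using cN by (smt (verit, best) mult_less_cancel_left_pos mult.assoc)
  have Arr_eq: "?Arr = (\<Sum>k<M. if je y \<omega> k = (pm, True) then 1 else 0)"
    unfolding Arr_def NT by (rule card_as_sum)
  have Dc_eq: "Dc y M \<omega> = (\<Sum>k<M. if je y \<omega> k = (pm, False) then 1 else 0)"
    unfolding Dc_card by (rule card_as_sum)
  have "real (xc y \<omega> M pm) \<ge> real (y pm) + ?Arr - Dc y M \<omega>"
    using queue_ineq[of y \<omega> M] unfolding Arr_eq Dc_eq .
  then have KD: "K \<le> Dc y M \<omega>" using xM Arr_lo K_def of_nat_0_le_iff[of "y pm"] by linarith
  have mpos: "real (length tr) * mu pm \<ge> 0" using mu_pos[rule_format, of pm] by simp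
  have "Cp y M \<omega> = (\<Sum>j<M. pdep (xc y \<omega> j) * fst (\<omega> j))" by (rule Cp_sum)
  also have "\<dots> = real (length tr) * mu pm * (\<Sum>j<M. nuk y \<omega> j * (jt y \<omega> (Suc j) - jt y \<omega> j))"
    unfolding sum_distrib_left
    by (intro sum.cong refl) (simp add: pdep_def rt_dep field_simps del: jtime.simps(1))
  also have "\<dots> \<le> real (length tr) * mu pm * ?I"
    using integral_lower[where \<omega>=\<omega>, OF good M1 M2] mpos by (intro mult_left_mono) auto
  also have "\<dots> \<le> real (length tr) * mu pm * (delta * T)"
    using I_hi mpos by (intro mult_left_mono) auto
  finally have Cp_le: "Cp y M \<omega> \<le> real (length tr) * mu pm * delta * T" by simp
  have "L \<le> exp (th * K - (exp th - 1) * Cp y M \<omega>)"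
    unfolding L_def using Cp_le th by (simp add: mult_left_mono mult.assoc)
  also have "\<dots> \<le> Wf th y K M \<omega>"
    using W_P2[where \<omega>=\<omega>, OF th _ KD] good less_imp_le by blast
  finally show ?thesis using KD by blast
qed

end

context starnet begin

lemma event_bound:
  fixes nrm :: "(route \<Rightarrow> real) \<Rightarrow> real" and a \<nu> :: "route \<Rightarrow> real"
  assumes cN: "cN > 0" "\<forall>x::route\<Rightarrow>real. supported R x \<longrightarrow> \<bar>x pm\<bar> \<le> cN * nrm x"
    and nu0: "\<nu> pm = 0" and ys: "supported R y"
    and n: "n > 0" and tau: "tau > 0" and th: "th \<ge> 0" and delta: "delta > 0"
    and T_def: "T = real n * tau"
    and K_def: "K = (a pm - delta) * T - cN * delta * real n"
    and L_def: "L = exp (th * K - (exp th - 1) * real (length tr) * mu pm * delta * T)"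
  shows "measure Omega (Event N C lam mu nrm n tau delta y (a, \<nu>)) \<le> 1 / L"
proof -
  interpret P: prob_space Omega by (rule Omega_prob)
  let ?E = "Event N C lam mu nrm n tau delta y (a, \<nu>)"
  have Lpos: "L > 0" unfolding L_def by simp
  have T: "T > 0" using n tau T_def by simp
  show ?thesis
  proof (cases "K > 0")
    case False
    have c0: "(exp th - 1) * real (length tr) * mu pm * delta * T \<ge> 0"
      using th mu_pos[rule_format, of pm] delta T by simp
    have "th * K \<le> 0" using False th by (simp add: mult_nonneg_nonpos)
    then have "L \<le> 1" unfolding L_def using c0 by simp
    then have "1 \<le> 1 / L" using Lpos by simp
    then show ?thesis using P.prob_le_1[of ?E] by linarith
  next
    case True
    let ?A = "\<Union>m. {\<omega> \<in> space Omega. K \<le> Dc y m \<omega> \<and> L \<le> Wf th y K m \<omega>}"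
    let ?B = "{\<omega> \<in> space Omega. \<exists>k. fst (\<omega> k) \<le> 0}"
    have Asets: "?A \<in> sets Omega" by measurable
    have Bnull: "?B \<in> null_sets Omega" by (rule bad_null)
    then have Bsets: "?B \<in> sets Omega" by auto
    have sub: "?E \<subseteq> ?A \<union> ?B"
    proof
      fix \<omega> assume ev: "\<omega> \<in> ?E"
      then have sp: "\<omega> \<in> space Omega" unfolding Event_def by auto
      show "\<omega> \<in> ?A \<union> ?B"
      proof (cases "\<exists>k. fst (\<omega> k) \<le> 0")
        case True then show ?thesis using sp by auto
      next
        case False
        then have good: "\<And>k. fst (\<omega> k) > 0" by (simp add: not_le)
        obtain m where "K \<le> Dc y m \<omega> \<and> L \<le> Wf th y K m \<omega>"
          using path_claim[OF cN nu0 ys n tau th delta T_def K_def L_def True ev good] by blast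
        then show ?thesis using sp by auto
      qed
    qed
    have "measure Omega ?E \<le> measure Omega (?A \<union> ?B)"
    proof (cases "?E \<in> sets Omega")
      case True then show ?thesis using sub Asets Bsets by (intro P.finite_measure_mono) auto
    next
      case False then show ?thesis by (simp add: measure_notin_sets)
    qed
    also have "\<dots> \<le> measure Omega ?A + measure Omega ?B" using Asets Bsets by (rule measure_Un_le)
    also have "measure Omega ?B = 0" using Bnull by (simp add: measure_def null_sets_def)
    also have "measure Omega ?A \<le> 1 / L"
    proof -
      have "emeasure Omega ?A \<le> ennreal (1 / L)" using union_bound[OF th Lpos] .
      then have "ennreal (measure Omega ?A) \<le> ennreal (1 / L)" using P.emeasure_eq_measure by simp
      then show ?thesis using Lpos by (simp add: ennreal_le_iff)
    qed
    finally show ?thesis by simp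
  qed
qed

end

lemma mono_tendsto_Inf:
  fixes F :: "real \<Rightarrow> ereal"
  assumes mono: "\<And>a b. 0 < a \<Longrightarrow> a \<le> b \<Longrightarrow> F a \<le> F b"
  shows "(F \<longlongrightarrow> Inf (F ` {0<..})) (at_right 0)"
proof (rule order_tendstoI)
  fix c assume c: "c < Inf (F ` {0<..})"
  show "\<forall>\<^sub>F x in at_right 0. c < F x"
    unfolding eventually_at_right_field
  proof (intro exI[of _ 1] conjI allI impI)
    fix y :: real assume "0 < y"
    then have "Inf (F ` {0<..}) \<le> F y" by (intro Inf_lower) auto
    then show "c < F y" using c by simp
  qed simp
next
  fix c assume c: "Inf (F ` {0<..}) < c"
  then obtain x0 where x0: "x0 > 0" "F x0 < c" by (auto simp: Inf_less_iff)
  show "\<forall>\<^sub>F x in at_right 0. F x < c"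
    unfolding eventually_at_right_field
  proof (intro exI[of _ x0] conjI allI impI)
    fix y :: real assume "0 < y" "y < x0"
    then have "F y \<le> F x0" by (intro mono) auto
    then show "F y < c" using x0 by simp
  qed (use x0 in simp)
qed

lemma elog_le: "p \<le> 1 / L \<Longrightarrow> L > 0 \<Longrightarrow> elog p \<le> ereal (- ln L)"
  unfolding elog_def
proof (cases "p \<le> 0")
  case False
  assume p: "p \<le> 1 / L" and L: "L > 0"
  then have "ln p \<le> ln (1 / L)" using False by (intro ln_mono) auto
  also have "ln (1 / L) = - ln L" using L by (simp add: ln_div)
  finally show "(if p \<le> 0 then - \<infinity> else ereal (ln p)) \<le> ereal (- ln L)" using False by simp
qed simp

theorem lemma6p3:
  fixes N :: nat and C :: "nat \<Rightarrow> real" and lam mu :: "route \<Rightarrow> real"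
    and nrm :: "(route \<Rightarrow> real) \<Rightarrow> real"
    and a \<nu> :: "route \<Rightarrow> real" and pm :: route
  assumes C_pos: "\<forall>i\<in>{1..N}. C i > 0"
    and lam_nonneg: "\<forall>r. lam r \<ge> 0"
    and mu_pos: "\<forall>r. mu r > 0"
    and norm: "is_norm_on (routes N lam) nrm"
    and G_in: "(a, \<nu>) \<in> Gamma_set N C lam"
    and pm: "pm \<in> routes N lam" "\<nu> pm = 0" "a pm > 0"
  shows "\<exists>h g.
     (\<forall>\<tau>>0. \<forall>\<delta>>0. ((\<lambda>\<epsilon>. limsup (rate_fun N C lam mu nrm (a, \<nu>) \<tau> \<delta> \<epsilon>)) \<longlongrightarrow> h \<tau> \<delta>) (at_right 0)) \<and>
     (\<forall>\<tau>>0. ((\<lambda>\<delta>. h \<tau> \<delta>) \<longlongrightarrow> g \<tau>) (at_right 0)) \<and>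
     (g \<longlongrightarrow> -\<infinity>) (at_right (0::real))"
proof -
  interpret S: starnet N C lam mu pm
    using C_pos lam_nonneg mu_pos pm(1) by unfold_locales auto
  obtain cN where cN: "cN > 0" "\<forall>x::route\<Rightarrow>real. supported (routes N lam) x \<longrightarrow> \<bar>x pm\<bar> \<le> cN * nrm x"
    using norm_lower[OF norm finite_routes pm(1)] by blast
  define Lc where "Lc = real (length (trans N lam))"
  define B where "B th tau delta = th * (a pm - delta - cN * delta / tau) - (exp th - 1) * Lc * mu pm * delta" for th tau delta
  define F where "F tau delta eps = limsup (rate_fun N C lam mu nrm (a, \<nu>) tau delta eps)" for tau delta eps
  have KB: "rate_fun N C lam mu nrm (a, \<nu>) tau delta eps n \<le> ereal (- B th tau delta)"
    if tau: "tau > 0" and delta: "delta > 0" and th: "th \<ge> 0" and n: "n > 0" for tau delta eps n th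
  proof -
    define T where "T = real n * tau"
    define K where "K = (a pm - delta) * T - cN * delta * real n"
    define L where "L = exp (th * K - (exp th - 1) * real (length (trans N lam)) * mu pm * delta * T)"
    have T: "T > 0" using n tau T_def by simp
    have KT: "th * K - (exp th - 1) * real (length (trans N lam)) * mu pm * delta * T = T * B th tau delta"
      unfolding K_def B_def Lc_def T_def using tau by (simp add: field_simps)
    have "(SUP y\<in>{y. supported (routes N lam) y \<and> nrm (\<lambda>r. real (y r)) < eps * real n}.
             elog (measure Omega (Event N C lam mu nrm n tau delta y (a, \<nu>)))) \<le> ereal (- ln L)"
    proof (rule SUP_least)
      fix y assume "y \<in> {y. supported (routes N lam) y \<and> nrm (\<lambda>r. real (y r)) < eps * real n}"
      then have ys: "supported (routes N lam) y" by simp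
      have "measure Omega (Event N C lam mu nrm n tau delta y (a, \<nu>)) \<le> 1 / L"
        using S.event_bound[where nrm=nrm and a=a and \<nu>=\<nu> and y=y, OF cN pm(2) ys n tau th delta T_def K_def L_def] .
      then show "elog (measure Omega (Event N C lam mu nrm n tau delta y (a, \<nu>))) \<le> ereal (- ln L)"
        by (rule elog_le) (simp add: L_def)
    qed
    also have "- ln L = - (T * B th tau delta)" unfolding L_def KT by simp
    finally have sup: "(SUP y\<in>{y. supported (routes N lam) y \<and> nrm (\<lambda>r. real (y r)) < eps * real n}.
             elog (measure Omega (Event N C lam mu nrm n tau delta y (a, \<nu>)))) \<le> ereal (- (T * B th tau delta))" .
    have "rate_fun N C lam mu nrm (a, \<nu>) tau delta eps n \<le> ereal (1 / T) * ereal (- (T * B th tau delta))"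
      unfolding rate_fun_def T_def[symmetric] using T by (intro ereal_mult_left_mono sup) auto
    also have "\<dots> = ereal (- B th tau delta)" using T by simp
    finally show ?thesis .
  qed
  have Fle: "F tau delta eps \<le> ereal (- B th tau delta)"
    if tau: "tau > 0" and delta: "delta > 0" and th: "th \<ge> 0" for tau delta eps th
    unfolding F_def
    by (rule Limsup_bounded) (use KB[OF tau delta th] in \<open>auto simp: eventually_sequentially intro!: exI[of _ 1]\<close>)
  have Fmono: "F tau delta e1 \<le> F tau delta e2" if tau: "tau > 0" and le: "e1 \<le> e2" for tau delta e1 e2
  proof -
    have "rate_fun N C lam mu nrm (a, \<nu>) tau delta e1 n \<le> rate_fun N C lam mu nrm (a, \<nu>) tau delta e2 n" for n
    proof -
      have "{y. supported (routes N lam) y \<and> nrm (\<lambda>r. real (y r)) < e1 * real n}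
            \<subseteq> {y. supported (routes N lam) y \<and> nrm (\<lambda>r. real (y r)) < e2 * real n}"
        using le mult_right_mono[OF le, of "real n"] by auto
      then have "(SUP y\<in>{y. supported (routes N lam) y \<and> nrm (\<lambda>r. real (y r)) < e1 * real n}.
             elog (measure Omega (Event N C lam mu nrm n tau delta y (a, \<nu>))))
          \<le> (SUP y\<in>{y. supported (routes N lam) y \<and> nrm (\<lambda>r. real (y r)) < e2 * real n}.
             elog (measure Omega (Event N C lam mu nrm n tau delta y (a, \<nu>))))"
        by (rule SUP_subset_mono) simp
      then show ?thesis unfolding rate_fun_def using tau by (intro ereal_mult_left_mono) auto
    qed
    then show ?thesis unfolding F_def by (intro Limsup_mono) auto
  qed
  define h where "h tau delta = Inf (F tau delta ` {0<..})" for tau delta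
  show ?thesis
  proof (intro exI[of _ h] exI[of _ "\<lambda>_. -\<infinity>"] conjI allI impI)
    fix tau delta :: real assume tau: "tau > 0" and delta: "delta > 0"
    show "((\<lambda>\<epsilon>. limsup (rate_fun N C lam mu nrm (a, \<nu>) tau delta \<epsilon>)) \<longlongrightarrow> h tau delta) (at_right 0)"
      unfolding h_def F_def[symmetric] using Fmono[OF tau] by (intro mono_tendsto_Inf) auto
  next
    fix tau :: real assume tau: "tau > 0"
    show "((\<lambda>delta. h tau delta) \<longlongrightarrow> -\<infinity>) (at_right 0)"
      unfolding tendsto_MInfty
    proof
      fix r :: real
      define th where "th = (\<bar>r\<bar> + 1) / a pm"
      have th0: "th \<ge> 0" unfolding th_def using pm(3) by simp
      have tha: "th * a pm = \<bar>r\<bar> + 1" unfolding th_def using pm(3) by simp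
      define Z where "Z = th * (1 + cN / tau) + (exp th - 1) * Lc * mu pm"
      have Z0: "Z \<ge> 0" unfolding Z_def Lc_def using th0 cN tau mu_pos[rule_format, of pm] by simp
      show "\<forall>\<^sub>F delta in at_right 0. h tau delta < ereal r"
        unfolding eventually_at_right_field
      proof (intro exI[of _ "1 / (Z + 1)"] conjI allI impI)
        show "(0::real) < 1 / (Z + 1)" using Z0 by simp
        fix delta :: real assume d0: "0 < delta" and d1: "delta < 1 / (Z + 1)"
        have "delta * Z < 1"
        proof -
          have "delta * (Z + 1) < 1" using d1 Z0 by (simp add: field_simps)
          then show ?thesis using d0 by (simp add: algebra_simps)
        qed
        moreover have "B th tau delta = th * a pm - delta * Z"
          unfolding B_def Z_def using tau by (simp add: field_simps)
        ultimately have "B th tau delta > - r" using tha by linarith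
        have "h tau delta \<le> F tau delta 1" unfolding h_def by (intro Inf_lower) auto
        also have "\<dots> \<le> ereal (- B th tau delta)" by (rule Fle[OF tau d0 th0])
        also have "\<dots> < ereal r" using \<open>B th tau delta > - r\<close> by simp
        finally show "h tau delta < ereal r" .
      qed
    qed
  next
    show "((\<lambda>_. - \<infinity>) \<longlongrightarrow> (- \<infinity> :: ereal)) (at_right (0::real))" by simp
  qed
qed

end
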